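(* Let $S$ be a finite set of states and $N=I=\{1,\ldots,n\}$ a set of individuals, and let $p_1,\ldots,p_n\in\Delta(S)$ be individual beliefs. A profile $(\rho_1,\ldots,\rho_n)\in\Delta(S)^n$ is a (pure-strategy) Nash equilibrium of the log utility preference revelation game $(\Delta(S),U_{p_i})_{i\in N}$ if and only if there is a parimutuel equilibrium with equal wealth $(\rho,\mathbf{x})$ of the parimutuel market $(\mathbb{R}^S_+,p_i)_{i\in N}$ such that \[\rho_{is}=\frac{\rho_s x_{is}}{\sum_{s'\in S}\rho_{s'}x_{is'}}\quad\text{for all } i\in N,\ s\in S.\] In particular, in that case $\frac{1}{n}\sum_{i=1}^n\rho_i=\rho$.
   Context: $\Delta(S)$ is the set of probability distributions on $S$. The log utility preference revelation game for the profile $(p_1,\ldots,p_n)$ is the normal-form game in which each player $i\in N$ has strategy space $\Delta(S)$ and payoff function \[U_{p_i}(\rho_1,\ldots,\rho_n)=\sum_{s\in S}p_{i,s}\log\Big(\frac{1}{n}\sum_{j=1}^n\rho_{j,s}\Big),\] with the convention $0\times\log 0=0$ (payoffs may equal $-\infty$). (This is the payoff obtained when society aggregates reported beliefs by the symmetric linear opinion pool $f(\rho_1,\ldots,\rho_n)=\frac1n\sum_j\rho_j$ and then chooses the portfolio maximizing expected log utility over $\{x\in\mathbb{R}^S_+:\sum_s x_s=1\}$, whose optimum is $x=f(\rho)$.) The parimutuel market $(\mathbb{R}^S_+,p_i)_{i\in N}$ consists of consumers $i\in N$, each with consumption set $\mathbb{R}^S_+$ and linear utility $x\mapsto p_i\cdot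 x$. A parimutuel equilibrium with equal wealth is a pair $(\rho,\mathbf{x})$ with $\rho\in\Delta(S)$ (a price vector) and $\mathbf{x}=(x_1,\ldots,x_n)\in(\mathbb{R}^S_+)^N$ such that (1) for each $i$, $\rho\cdot x_i\le 1/n$ and $p_i\cdot x_i\ge p_i\cdot y$ for every $y\in\mathbb{R}^S_+$ with $\rho\cdot y\le 1/n$; and (2) $\sum_{i=1}^n x_i=(1,\ldots,1)$. *)

theory Defs
  imports "HOL-Analysis.Analysis" "HOL-Library.Extended_Real"
begin

definition distr_set :: "('a::finite \<Rightarrow> real) set" where
  "distr_set = {q. (\<forall>s. 0 \<le> q s) \<and> (\<Sum>s\<in>UNIV. q s) = 1}"

definition plogq :: "real \<Rightarrow> real \<Rightarrow> ereal" where
  "plogq p q = (if p = 0 then 0 else if q = 0 then -\<infinity> else ereal (p * ln q))"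

definition pool :: "nat \<Rightarrow> (nat \<Rightarrow> 'a \<Rightarrow> real) \<Rightarrow> 'a \<Rightarrow> real" where
  "pool n \<rho>s s = (1 / real n) * (\<Sum>j\<in>{1..n}. \<rho>s j s)"

definition log_payoff :: "nat \<Rightarrow> ('a::finite \<Rightarrow> real) \<Rightarrow> (nat \<Rightarrow> 'a \<Rightarrow> real) \<Rightarrow> ereal" where
  "log_payoff n q \<rho>s = (\<Sum>s\<in>UNIV. plogq (q s) (pool n \<rho>s s))"

definition nash_eq :: "nat \<Rightarrow> (nat \<Rightarrow> 'a::finite \<Rightarrow> real) \<Rightarrow> (nat \<Rightarrow> 'a \<Rightarrow> real) \<Rightarrow> bool" where
  "nash_eq n p \<rho>s \<longleftrightarrow>
     (\<forall>i\<in>{1..n}. \<rho>s i \<in> distr_set) \<and>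
     (\<forall>i\<in>{1..n}. \<forall>\<sigma>\<in>distr_set. log_payoff n (p i) (\<rho>s(i := \<sigma>)) \<le> log_payoff n (p i) \<rho>s)"

definition dotp :: "('a::finite \<Rightarrow> real) \<Rightarrow> ('a \<Rightarrow> real) \<Rightarrow> real" where
  "dotp u v = (\<Sum>s\<in>UNIV. u s * v s)"

definition parimutuel_eq :: "nat \<Rightarrow> (nat \<Rightarrow> 'a::finite \<Rightarrow> real) \<Rightarrow> ('a \<Rightarrow> real) \<Rightarrow> (nat \<Rightarrow> 'a \<Rightarrow> real) \<Rightarrow> bool" where
  "parimutuel_eq n p \<rho> x \<longleftrightarrow>
     \<rho> \<in> distr_set \<and>
     (\<forall>i\<in>{1..n}. (\<forall>s. 0 \<le> x i s) \<and> dotp \<rho> (x i) \<le> 1 / real n \<and>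
        (\<forall>y. (\<forall>s. 0 \<le> y s) \<and> dotp \<rho> y \<le> 1 / real n \<longrightarrow> dotp (p i) y \<le> dotp (p i) (x i))) \<and>
     (\<forall>s. (\<Sum>i\<in>{1..n}. x i s) = 1)"

end

theory Submission
  imports Defs
begin

lemma L1:
  assumes "p \<ge> 0" "q \<ge> 0" "p \<noteq> 0 \<longrightarrow> a > 0"
  shows "plogq p q \<le> ereal (p * ln a + p * (q - a) / a)"
proof (cases "p = 0")
  case True then show ?thesis by (simp add: plogq_def)
next
  case False
  show ?thesis
  proof (cases "q = 0")
    case True then show ?thesis using False by (simp add: plogq_def)
  next
    case q: False
    have a: "a > 0" using assms False by auto
    have q0: "q > 0" using assms q by auto
    have "ln (q / a) \<le> q / a - 1" using a q0 by (intro ln_le_minus_one) simp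
    hence "ln q \<le> ln a + (q - a) / a" using a q0 by (simp add: ln_div diff_divide_distrib)
    hence "p * ln q \<le> p * (ln a + (q - a) / a)" using assms by (intro mult_left_mono) auto
    then show ?thesis using False q by (simp add: plogq_def algebra_simps)
  qed
qed

lemma L2:
  assumes "p \<noteq> 0 \<longrightarrow> q > 0"
  shows "plogq p q = ereal (p * ln q)"
  using assms by (auto simp: plogq_def)

lemma L2sum:
  assumes "\<forall>s. q s \<noteq> 0 \<longrightarrow> pool n \<rho>s s > 0"
  shows "log_payoff n q \<rho>s = ereal (\<Sum>s\<in>UNIV. q s * ln (pool n \<rho>s s))"
proof -
  have "log_payoff n q \<rho>s = (\<Sum>s\<in>UNIV. ereal (q s * ln (pool n \<rho>s s)))"
    unfolding log_payoff_def using assms by (intro sum.cong refl L2) auto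
  also have "\<dots> = ereal (\<Sum>s\<in>UNIV. q s * ln (pool n \<rho>s s))" by (rule sum_ereal)
  finally show ?thesis .
qed

lemma L3:
  fixes q :: "'a::finite \<Rightarrow> real"
  assumes "q t \<noteq> 0" "pool n \<rho>s t = 0"
  shows "log_payoff n q \<rho>s = -\<infinity>"
proof -
  have "log_payoff n q \<rho>s = plogq (q t) (pool n \<rho>s t) + (\<Sum>s\<in>UNIV-{t}. plogq (q s) (pool n \<rho>s s))"
    unfolding log_payoff_def by (rule sum.remove) auto
  moreover have "(\<Sum>s\<in>UNIV-{t}. plogq (q s) (pool n \<rho>s s)) \<noteq> \<infinity>"
    by (simp add: sum_Pinfty plogq_def)
  moreover have "plogq (q t) (pool n \<rho>s t) = -\<infinity>" using assms by (simp add: plogq_def)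
  ultimately show ?thesis by simp
qed

lemma pool_upd:
  assumes "i \<in> {1..n}"
  shows "pool n (\<rho>s(i:=\<sigma>)) s = pool n \<rho>s s + (\<sigma> s - \<rho>s i s) / real n"
proof -
  have "(\<Sum>j\<in>{1..n}. (\<rho>s(i:=\<sigma>)) j s) = \<sigma> s + (\<Sum>j\<in>{1..n}-{i}. \<rho>s j s)"
    using assms by (subst sum.remove[of _ i]) auto
  also have "\<dots> = \<sigma> s - \<rho>s i s + (\<Sum>j\<in>{1..n}. \<rho>s j s)"
    using assms by (subst (2) sum.remove[of _ i]) auto
  finally have e: "(\<Sum>j\<in>{1..n}. (\<rho>s(i:=\<sigma>)) j s) = \<sigma> s - \<rho>s i s + (\<Sum>j\<in>{1..n}. \<rho>s j s)" .
  show ?thesis unfolding pool_def by (simp only: e) (auto simp: field_split_simps)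
qed

lemma pool_ge:
  assumes "i \<in> {1..n}" "\<forall>j\<in>{1..n}. \<forall>s. \<rho>s j s \<ge> 0"
  shows "\<rho>s i s / real n \<le> pool n \<rho>s s"
proof -
  have "\<rho>s i s \<le> (\<Sum>j\<in>{1..n}. \<rho>s j s)"
    using assms by (intro member_le_sum) auto
  then show ?thesis unfolding pool_def by (simp add: divide_right_mono)
qed

lemma pool_nonneg:
  assumes "\<forall>j\<in>{1..n}. \<forall>s. \<rho>s j s \<ge> 0"
  shows "pool n \<rho>s s \<ge> 0"
  unfolding pool_def using assms by (intro mult_nonneg_nonneg sum_nonneg) auto

lemma dotp_delta: "dotp u (\<lambda>t. if t = s then c else 0) = u s * c"
  unfolding dotp_def by (simp add: if_distrib cong: if_cong)

lemma dot_eq: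
  assumes pe: "parimutuel_eq n p \<rho> x" and n: "n \<ge> 1" and i: "i \<in> {1..n}"
  shows "dotp \<rho> (x i) = 1 / real n"
proof -
  have r: "\<rho> \<in> distr_set" and le: "\<forall>j\<in>{1..n}. dotp \<rho> (x j) \<le> 1 / real n"
    and sx: "\<forall>s. (\<Sum>j\<in>{1..n}. x j s) = 1"
    using pe unfolding parimutuel_eq_def by auto
  have "(\<Sum>j\<in>{1..n}. dotp \<rho> (x j)) = (\<Sum>s\<in>UNIV. \<rho> s * (\<Sum>j\<in>{1..n}. x j s))"
    unfolding dotp_def by (simp add: sum_distrib_left) (rule sum.swap)
  also have "\<dots> = 1" using sx r by (simp add: distr_set_def)
  finally have S: "(\<Sum>j\<in>{1..n}. dotp \<rho> (x j)) = 1" .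
  have "(\<Sum>j\<in>{1..n}. 1 / real n - dotp \<rho> (x j)) = 0"
    using n by (simp only: sum_subtractf S) simp
  moreover have "\<forall>j\<in>{1..n}. 0 \<le> 1 / real n - dotp \<rho> (x j)" using le by auto
  ultimately have "\<forall>j\<in>{1..n}. 1 / real n - dotp \<rho> (x j) = 0"
    using sum_nonneg_eq_0_iff[of "{1..n}" "\<lambda>j. 1 / real n - dotp \<rho> (x j)"] by auto
  then show ?thesis using i by auto
qed

lemma rel:
  assumes pe: "parimutuel_eq n p \<rho> x" and n: "n \<ge> 1" and i: "i \<in> {1..n}"
    and R: "\<forall>s. \<rho>s i s = \<rho> s * x i s / (\<Sum>s'\<in>UNIV. \<rho> s' * x i s')"
  shows "\<rho>s i s = real n * \<rho> s * x i s"
proof -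
  have "(\<Sum>s'\<in>UNIV. \<rho> s' * x i s') = 1 / real n"
    using dot_eq[OF pe n i] unfolding dotp_def .
  then show ?thesis using R by simp
qed

lemma pool_eq:
  assumes pe: "parimutuel_eq n p \<rho> x" and n: "n \<ge> 1"
    and R: "\<forall>i\<in>{1..n}. \<forall>s. \<rho>s i s = \<rho> s * x i s / (\<Sum>s'\<in>UNIV. \<rho> s' * x i s')"
  shows "pool n \<rho>s = \<rho>"
proof
  fix s
  have sx: "(\<Sum>j\<in>{1..n}. x j s) = 1"
    using pe unfolding parimutuel_eq_def by auto
  have "(\<Sum>j\<in>{1..n}. \<rho>s j s) = (\<Sum>j\<in>{1..n}. real n * \<rho> s * x j s)"
  proof (intro sum.cong refl)
    fix j assume j: "j \<in> {1..n}"
    have "\<forall>s. \<rho>s j s = \<rho> s * x j s / (\<Sum>s'\<in>UNIV. \<rho> s' * x j s')" using R j by blast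
    from rel[where \<rho>s=\<rho>s, OF pe n j this] show "\<rho>s j s = real n * \<rho> s * x j s" .
  qed
  also have "\<dots> = real n * \<rho> s" using sx by (simp add: sum_distrib_left[symmetric])
  finally show "pool n \<rho>s s = \<rho> s" unfolding pool_def using n by simp
qed

lemma lam:
  assumes pe: "parimutuel_eq n p \<rho> x" and n: "n \<ge> 1" and i: "i \<in> {1..n}"
  shows "p i s \<le> real n * dotp (p i) (x i) * \<rho> s"
proof -
  have r: "\<rho> \<in> distr_set" and opt: "\<And>y. (\<forall>s. 0 \<le> y s) \<Longrightarrow> dotp \<rho> y \<le> 1 / real n \<Longrightarrow> dotp (p i) y \<le> dotp (p i) (x i)"
    using pe i unfolding parimutuel_eq_def by auto
  have r0: "\<rho> s \<ge> 0" using r by (simp add: distr_set_def)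
  show ?thesis
  proof (cases "\<rho> s = 0")
    case False
    hence rp: "\<rho> s > 0" using r0 by simp
    let ?y = "\<lambda>t. if t = s then 1 / (real n * \<rho> s) else 0"
    have "dotp (p i) ?y \<le> dotp (p i) (x i)"
      using rp n by (intro opt) (auto simp: dotp_delta)
    hence "p i s / (real n * \<rho> s) \<le> dotp (p i) (x i)" by (simp add: dotp_delta)
    then show ?thesis using rp n by (simp add: divide_le_eq algebra_simps)
  next
    case True
    show ?thesis
    proof (rule ccontr)
      assume "\<not> ?thesis"
      hence ps: "p i s > 0" using True by simp
      let ?M = "(\<bar>dotp (p i) (x i)\<bar> + 1) / p i s"
      let ?y = "\<lambda>t. if t = s then ?M else 0"
      have "dotp (p i) ?y \<le> dotp (p i) (x i)"
        using ps n True by (intro opt) (auto simp: dotp_delta)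
      hence "\<bar>dotp (p i) (x i)\<bar> + 1 \<le> dotp (p i) (x i)" using ps by (simp add: dotp_delta)
      then show False by simp
    qed
  qed
qed

lemma backward_dir:
  fixes p :: "nat \<Rightarrow> 'a::finite \<Rightarrow> real" and \<rho>s :: "nat \<Rightarrow> 'a \<Rightarrow> real"
  assumes n: "n \<ge> 1"
    and P: "\<forall>i\<in>{1..n}. p i \<in> distr_set"
    and Q: "\<forall>i\<in>{1..n}. \<rho>s i \<in> distr_set"
    and pe: "parimutuel_eq n p \<rho> x"
    and R: "\<forall>i\<in>{1..n}. \<forall>s. \<rho>s i s = \<rho> s * x i s / (\<Sum>s'\<in>UNIV. \<rho> s' * x i s')"
  shows "nash_eq n p \<rho>s"
  unfolding nash_eq_def
proof (intro conjI ballI)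
  fix i assume i: "i \<in> {1..n}" then show "\<rho>s i \<in> distr_set" using Q by auto
next
  fix i and \<sigma> :: "'a \<Rightarrow> real" assume i: "i \<in> {1..n}" and sig: "\<sigma> \<in> distr_set"
  define D where "D = dotp (p i) (x i)"
  have pool: "pool n \<rho>s = \<rho>" using pool_eq[OF pe n R] .
  have r: "\<rho> \<in> distr_set" and xnn: "\<forall>s. 0 \<le> x i s"
    using pe i unfolding parimutuel_eq_def by auto
  have r0: "\<And>s. \<rho> s \<ge> 0" using r by (simp add: distr_set_def)
  have p0: "\<And>s. p i s \<ge> 0" and p1: "(\<Sum>s\<in>UNIV. p i s) = 1" using P i by (auto simp: distr_set_def)
  have s0: "\<And>s. \<sigma> s \<ge> 0" and s1: "(\<Sum>s\<in>UNIV. \<sigma> s) = 1" using sig by (auto simp: distr_set_def)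
  have lm: "\<And>s. p i s \<le> real n * D * \<rho> s" unfolding D_def using lam[OF pe n i] .
  have D0: "D \<ge> 0" unfolding D_def dotp_def using p0 xnn by (intro sum_nonneg mult_nonneg_nonneg) auto
  have pz: "\<And>s. \<rho> s = 0 \<Longrightarrow> p i s = 0" using lm p0 by (metis mult_zero_right order_antisym)
  have pos: "\<forall>s. p i s \<noteq> 0 \<longrightarrow> pool n \<rho>s s > 0" using pool pz r0 by (metis order_le_less)
  have rr: "\<And>s. \<rho>s i s = real n * \<rho> s * x i s"
    using rel[where \<rho>s=\<rho>s, OF pe n i] R i by blast
  have nnu: "\<forall>j\<in>{1..n}. \<forall>s. (\<rho>s(i:=\<sigma>)) j s \<ge> 0" using Q s0 by (auto simp: distr_set_def)
  define q where "q s = pool n (\<rho>s(i:=\<sigma>)) s" for s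
  have q0: "\<And>s. q s \<ge> 0" unfolding q_def using pool_nonneg[OF nnu] .
  have qd: "\<And>s. q s - \<rho> s = (\<sigma> s - \<rho>s i s) / real n"
    unfolding q_def using pool_upd[OF i, of \<rho>s \<sigma>] pool by simp
  have "log_payoff n (p i) (\<rho>s(i:=\<sigma>)) = (\<Sum>s\<in>UNIV. plogq (p i s) (q s))"
    unfolding log_payoff_def q_def ..
  also have "\<dots> \<le> (\<Sum>s\<in>UNIV. ereal (p i s * ln (\<rho> s) + p i s * (q s - \<rho> s) / \<rho> s))"
    using p0 q0 pos pool by (intro sum_mono L1) auto
  also have "\<dots> = ereal ((\<Sum>s\<in>UNIV. p i s * ln (\<rho> s)) + (\<Sum>s\<in>UNIV. p i s * (q s - \<rho> s) / \<rho> s))"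
    by (simp add: sum.distrib)
  also have "\<dots> \<le> ereal (\<Sum>s\<in>UNIV. p i s * ln (\<rho> s))"
  proof -
    have t: "p i s * (q s - \<rho> s) / \<rho> s \<le> D * \<sigma> s - p i s * x i s" for s
    proof (cases "\<rho> s = 0")
      case True then show ?thesis using pz D0 s0 by simp
    next
      case False
      hence rp: "\<rho> s > 0" using r0[of s] by linarith
      have "p i s * (q s - \<rho> s) / \<rho> s = p i s * \<sigma> s / (real n * \<rho> s) - p i s * x i s"
        using rp n by (simp add: qd rr field_simps)
      also have "p i s * \<sigma> s / (real n * \<rho> s) \<le> D * \<sigma> s"
      proof -
        have "p i s * \<sigma> s \<le> (real n * D * \<rho> s) * \<sigma> s" using lm s0 by (intro mult_right_mono) auto
        then show ?thesis using rp n by (simp add: divide_le_eq algebra_simps)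
      qed
      finally show ?thesis by simp
    qed
    have "(\<Sum>s\<in>UNIV. p i s * (q s - \<rho> s) / \<rho> s) \<le> (\<Sum>s\<in>UNIV. D * \<sigma> s - p i s * x i s)"
      using t by (intro sum_mono) auto
    also have "\<dots> = 0" using s1 by (simp add: sum_subtractf sum_distrib_left[symmetric] D_def dotp_def)
    finally show ?thesis by simp
  qed
  also have "\<dots> = log_payoff n (p i) \<rho>s"
    using L2sum[OF pos] pool by simp
  finally show "log_payoff n (p i) (\<rho>s(i:=\<sigma>)) \<le> log_payoff n (p i) \<rho>s" .
qed

lemma foc:
  fixes p :: "nat \<Rightarrow> 'a::finite \<Rightarrow> real" and \<rho>s :: "nat \<Rightarrow> 'a \<Rightarrow> real"
  assumes n: "n \<ge> 1" and i: "i \<in> {1..n}" and Q: "\<forall>j\<in>{1..n}. \<rho>s j \<in> distr_set"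
    and N: "nash_eq n p \<rho>s"
    and pos: "\<forall>s. p i s \<noteq> 0 \<longrightarrow> pool n \<rho>s s > 0" and t: "pool n \<rho>s t > 0"
  shows "p i t \<le> (\<Sum>s\<in>UNIV. p i s * \<rho>s i s / pool n \<rho>s s) * pool n \<rho>s t"
proof (rule ccontr)
  define r where "r = pool n \<rho>s"
  define L where "L = (\<Sum>s\<in>UNIV. p i s * \<rho>s i s / r s)"
  assume "\<not> ?thesis"
  hence gt: "p i t > L * r t" unfolding L_def r_def by simp
  have rt: "r t > 0" using t r_def by simp
  have nn: "\<forall>j\<in>{1..n}. \<forall>s. \<rho>s j s \<ge> 0" using Q by (auto simp: distr_set_def)
  have ri: "\<And>s. \<rho>s i s / real n \<le> r s" unfolding r_def using pool_ge[OF i nn] .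
  have ri0: "\<And>s. \<rho>s i s \<ge> 0" using nn i by auto
  have r1: "(\<Sum>s\<in>UNIV. \<rho>s i s) = 1" using Q i by (auto simp: distr_set_def)
  define c where "c s = ((if s = t then 1 else 0) - \<rho>s i s) / real n" for s
  define f where "f h = (\<Sum>s\<in>UNIV. p i s * ln (r s + h * c s))" for h
  have der: "(f has_real_derivative (\<Sum>s\<in>UNIV. p i s * c s / r s)) (at 0)"
    unfolding f_def
  proof (intro DERIV_sum)
    fix s :: 'a
    show "((\<lambda>h. p i s * ln (r s + h * c s)) has_real_derivative p i s * c s / r s) (at 0)"
    proof (cases "p i s = 0")
      case True then show ?thesis by simp
    next
      case False
      hence "r s > 0" using pos r_def by simp
      then show ?thesis by (auto intro!: derivative_eq_intros simp: field_simps)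
    qed
  qed
  have trm: "p i s * c s / r s = ((if s = t then p i s / r s else 0) - p i s * \<rho>s i s / r s) / real n" for s
    by (simp add: c_def diff_divide_distrib right_diff_distrib mult.commute)
  have "(\<Sum>s\<in>UNIV. p i s * c s / r s) = (p i t / r t - L) / real n"
    unfolding trm L_def by (simp add: sum_divide_distrib[symmetric] sum_subtractf)
  moreover have "p i t / r t - L > 0" using gt rt by (simp add: less_divide_eq)
  ultimately have dpos: "(\<Sum>s\<in>UNIV. p i s * c s / r s) > 0" using n by simp
  obtain d where d: "d > 0" "\<forall>h>0. h < d \<longrightarrow> f 0 < f (0 + h)"
    using DERIV_pos_inc_right[OF der dpos] by blast
  define h where "h = min (d/2) (1/2)"
  have h: "h > 0" "h < d" "h < 1" using d(1) unfolding h_def by auto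
  hence fh: "f 0 < f h" using d by auto
  define \<sigma> where "\<sigma> s = (1 - h) * \<rho>s i s + h * (if s = t then 1 else 0)" for s
  have sig: "\<sigma> \<in> distr_set"
    unfolding distr_set_def \<sigma>_def using h ri0 r1
    by (auto simp: sum.distrib sum_distrib_left[symmetric] intro!: add_nonneg_nonneg mult_nonneg_nonneg)
  have pu: "pool n (\<rho>s(i:=\<sigma>)) s = r s + h * c s" for s
    using pool_upd[OF i, of \<rho>s \<sigma>] by (simp add: r_def \<sigma>_def c_def field_simps)
  have pos2: "\<forall>s. p i s \<noteq> 0 \<longrightarrow> pool n (\<rho>s(i:=\<sigma>)) s > 0"
  proof (intro allI impI)
    fix s assume "p i s \<noteq> 0"
    hence rs: "r s > 0" using pos r_def by simp
    have "c s \<ge> - (\<rho>s i s / real n)" unfolding c_def by (auto simp: divide_right_mono diff_divide_distrib)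
    hence "h * c s \<ge> h * (- (\<rho>s i s / real n))" using h by (intro mult_left_mono) auto
    moreover have "h * (\<rho>s i s / real n) \<le> h * r s" using h ri[of s] by (intro mult_left_mono) auto
    moreover have "h * r s < r s" using h rs by simp
    ultimately show "pool n (\<rho>s(i:=\<sigma>)) s > 0" unfolding pu by linarith
  qed
  have "log_payoff n (p i) (\<rho>s(i:=\<sigma>)) = ereal (f h)" using L2sum[OF pos2] by (simp add: pu f_def)
  moreover have "log_payoff n (p i) \<rho>s = ereal (f 0)" using L2sum[OF pos] by (simp add: f_def r_def)
  moreover have "log_payoff n (p i) (\<rho>s(i:=\<sigma>)) \<le> log_payoff n (p i) \<rho>s"
    using N i sig unfolding nash_eq_def by blast
  ultimately show False using fh by simp
qed

lemma forward_dir: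
  fixes p :: "nat \<Rightarrow> 'a::finite \<Rightarrow> real" and \<rho>s :: "nat \<Rightarrow> 'a \<Rightarrow> real"
  assumes n: "n \<ge> 1"
    and P: "\<forall>i\<in>{1..n}. p i \<in> distr_set"
    and Q: "\<forall>i\<in>{1..n}. \<rho>s i \<in> distr_set"
    and N: "nash_eq n p \<rho>s"
  shows "\<exists>\<rho> x. parimutuel_eq n p \<rho> x \<and>
              (\<forall>i\<in>{1..n}. \<forall>s. \<rho>s i s = \<rho> s * x i s / (\<Sum>s'\<in>UNIV. \<rho> s' * x i s'))"
proof -
  define r where "r = pool n \<rho>s"
  have nn: "\<forall>j\<in>{1..n}. \<forall>s. \<rho>s j s \<ge> 0" using Q by (auto simp: distr_set_def)
  have r0: "\<And>s. r s \<ge> 0" unfolding r_def using pool_nonneg[OF nn] .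
  have Q1: "\<And>j. j \<in> {1..n} \<Longrightarrow> (\<Sum>s\<in>UNIV. \<rho>s j s) = 1" using Q by (auto simp: distr_set_def)
  have P0: "\<And>j s. j \<in> {1..n} \<Longrightarrow> p j s \<ge> 0" using P by (auto simp: distr_set_def)
  have "(\<Sum>s\<in>UNIV. \<Sum>j\<in>{1..n}. \<rho>s j s) = (\<Sum>j\<in>{1..n}. \<Sum>s\<in>UNIV. \<rho>s j s)" by (rule sum.swap)
  also have "\<dots> = real n" using Q1 by simp
  finally have sw: "(\<Sum>s\<in>UNIV. \<Sum>j\<in>{1..n}. \<rho>s j s) = real n" .
  have r1: "(\<Sum>s\<in>UNIV. r s) = 1" unfolding r_def pool_def sum_distrib_left[symmetric] sw
    using n by simp
  have rdist: "r \<in> distr_set" using r0 r1 by (simp add: distr_set_def)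
  have ri: "\<And>j s. j \<in> {1..n} \<Longrightarrow> \<rho>s j s / real n \<le> r s" unfolding r_def using pool_ge[OF _ nn] by blast
  have rsum: "\<And>s. (\<Sum>j\<in>{1..n}. \<rho>s j s) = real n * r s" unfolding r_def pool_def using n by simp
  have rz: "\<And>j s. j \<in> {1..n} \<Longrightarrow> r s = 0 \<Longrightarrow> \<rho>s j s = 0"
  proof -
    fix j s assume j: "j \<in> {1..n}" and z: "r s = 0"
    have "\<rho>s j s / real n \<le> 0" using ri[OF j, of s] z by simp
    hence "\<rho>s j s \<le> 0" using n by (simp add: divide_le_0_iff)
    then show "\<rho>s j s = 0" using nn j by (meson order_antisym)
  qed
  have ppos: "\<And>i s. i \<in> {1..n} \<Longrightarrow> p i s \<noteq> 0 \<Longrightarrow> r s > 0"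
  proof (rule ccontr)
    fix i s assume i: "i \<in> {1..n}" and ps: "p i s \<noteq> 0" and "\<not> r s > 0"
    hence z: "r s = 0" using r0[of s] by linarith
    have m: "log_payoff n (p i) \<rho>s = -\<infinity>" using L3[of "p i" s n \<rho>s] ps z r_def by simp
    have nnu: "\<forall>j\<in>{1..n}. \<forall>s. (\<rho>s(i:=p i)) j s \<ge> 0" using nn P0 i by auto
    have pos3: "\<forall>s. p i s \<noteq> 0 \<longrightarrow> pool n (\<rho>s(i:=p i)) s > 0"
    proof (intro allI impI)
      fix s assume "p i s \<noteq> 0"
      hence "p i s > 0" using P0[OF i, of s] by linarith
      moreover have "(\<rho>s(i:=p i)) i s / real n \<le> pool n (\<rho>s(i:=p i)) s" using pool_ge[OF i nnu] .
      moreover have "p i s / real n > 0" using n \<open>p i s > 0\<close> by simp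
      ultimately show "pool n (\<rho>s(i:=p i)) s > 0" by simp
    qed
    have "log_payoff n (p i) (\<rho>s(i:=p i)) \<le> log_payoff n (p i) \<rho>s"
      using N i P unfolding nash_eq_def by blast
    then show False using L2sum[OF pos3] m by simp
  qed
  define x where "x i s = (if r s > 0 then \<rho>s i s / (real n * r s) else 1 / real n)" for i s
  have rx: "\<And>i s. i \<in> {1..n} \<Longrightarrow> r s * x i s = \<rho>s i s / real n"
  proof -
    fix i s assume i: "i \<in> {1..n}"
    show "r s * x i s = \<rho>s i s / real n"
    proof (cases "r s > 0")
      case True then show ?thesis unfolding x_def using n by auto
    next
      case False
      hence "r s = 0" using r0[of s] by linarith
      then show ?thesis unfolding x_def using rz[OF i] by simp
    qed
  qed
  have dx: "\<And>i. i \<in> {1..n} \<Longrightarrow> dotp r (x i) = 1 / real n"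
    unfolding dotp_def using rx Q1 by (simp add: sum_divide_distrib[symmetric])
  define L where "L i = (\<Sum>s\<in>UNIV. p i s * \<rho>s i s / r s)" for i
  have lm: "\<And>i s. i \<in> {1..n} \<Longrightarrow> p i s \<le> L i * r s"
  proof -
    fix i s assume i: "i \<in> {1..n}"
    show "p i s \<le> L i * r s"
    proof (cases "r s > 0")
      case True
      have pos: "\<forall>s. p i s \<noteq> 0 \<longrightarrow> pool n \<rho>s s > 0" using ppos[OF i] r_def by auto
      show ?thesis using foc[OF n i Q N pos, of s] True unfolding L_def r_def by simp
    next
      case False then show ?thesis using ppos[OF i, of s] r0[of s] by fastforce
    qed
  qed
  have L0: "\<And>i. i \<in> {1..n} \<Longrightarrow> L i \<ge> 0" unfolding L_def using P0 nn r0
    by (intro sum_nonneg divide_nonneg_nonneg mult_nonneg_nonneg) auto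
  have px: "\<And>i. i \<in> {1..n} \<Longrightarrow> dotp (p i) (x i) = L i / real n"
  proof -
    fix i assume i: "i \<in> {1..n}"
    have "p i s * x i s = p i s * \<rho>s i s / r s / real n" for s
      using ppos[OF i, of s] unfolding x_def by (cases "p i s = 0") (auto simp: field_simps)
    then show "dotp (p i) (x i) = L i / real n" unfolding dotp_def L_def by (simp add: sum_divide_distrib)
  qed
  have pe: "parimutuel_eq n p r x"
    unfolding parimutuel_eq_def
  proof (intro conjI ballI allI impI rdist)
    fix i s assume i: "i \<in> {1..n}"
    show "0 \<le> x i s" unfolding x_def using nn i r0 n by auto
  next
    fix i assume i: "i \<in> {1..n}"
    show "dotp r (x i) \<le> 1 / real n" using dx[OF i] by simp
  next
    fix i y assume i: "i \<in> {1..n}" and y: "(\<forall>s. 0 \<le> y s) \<and> dotp r y \<le> 1 / real n"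
    have "dotp (p i) y \<le> (\<Sum>s\<in>UNIV. L i * (r s * y s))"
      unfolding dotp_def using lm[OF i] y by (intro sum_mono) (simp add: mult_right_mono mult.assoc[symmetric])
    also have "\<dots> = L i * dotp r y" unfolding dotp_def by (simp add: sum_distrib_left)
    also have "\<dots> \<le> L i * (1 / real n)" using y L0[OF i] by (intro mult_left_mono) auto
    also have "\<dots> = dotp (p i) (x i)" using px[OF i] by simp
    finally show "dotp (p i) y \<le> dotp (p i) (x i)" .
  next
    fix s
    show "(\<Sum>i\<in>{1..n}. x i s) = 1"
    proof (cases "r s > 0")
      case True
      have "(\<Sum>i\<in>{1..n}. x i s) = (\<Sum>i\<in>{1..n}. \<rho>s i s) / (real n * r s)"
        unfolding x_def using True by (simp add: sum_divide_distrib)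
      then show ?thesis using rsum True n by simp
    next
      case False then show ?thesis unfolding x_def using n by simp
    qed
  qed
  have "\<forall>i\<in>{1..n}. \<forall>s. \<rho>s i s = r s * x i s / (\<Sum>s'\<in>UNIV. r s' * x i s')"
  proof (intro ballI allI)
    fix i s assume i: "i \<in> {1..n}"
    have "(\<Sum>s'\<in>UNIV. r s' * x i s') = 1 / real n" using dx[OF i] unfolding dotp_def .
    then show "\<rho>s i s = r s * x i s / (\<Sum>s'\<in>UNIV. r s' * x i s')" using rx[OF i, of s] n by simp
  qed
  with pe show ?thesis by blast
qed

theorem proposition3:
  fixes n :: nat and p :: "nat \<Rightarrow> 'a::finite \<Rightarrow> real" and \<rho>s :: "nat \<Rightarrow> 'a \<Rightarrow> real"
  assumes "n \<ge> 1"
    and "\<forall>i\<in>{1..n}. p i \<in> distr_set"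
    and "\<forall>i\<in>{1..n}. \<rho>s i \<in> distr_set"
  shows "(nash_eq n p \<rho>s \<longleftrightarrow>
           (\<exists>\<rho> x. parimutuel_eq n p \<rho> x \<and>
              (\<forall>i\<in>{1..n}. \<forall>s. \<rho>s i s = \<rho> s * x i s / (\<Sum>s'\<in>UNIV. \<rho> s' * x i s'))))
      \<and> (\<forall>\<rho> x. nash_eq n p \<rho>s \<and> parimutuel_eq n p \<rho> x \<and>
              (\<forall>i\<in>{1..n}. \<forall>s. \<rho>s i s = \<rho> s * x i s / (\<Sum>s'\<in>UNIV. \<rho> s' * x i s'))
            \<longrightarrow> pool n \<rho>s = \<rho>)"
proof (intro conjI allI impI iffI)
  assume "nash_eq n p \<rho>s"
  then show "\<exists>\<rho> x. parimutuel_eq n p \<rho> x \<and>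
              (\<forall>i\<in>{1..n}. \<forall>s. \<rho>s i s = \<rho> s * x i s / (\<Sum>s'\<in>UNIV. \<rho> s' * x i s'))"
    by (rule forward_dir[OF assms])
next
  assume "\<exists>\<rho> x. parimutuel_eq n p \<rho> x \<and>
              (\<forall>i\<in>{1..n}. \<forall>s. \<rho>s i s = \<rho> s * x i s / (\<Sum>s'\<in>UNIV. \<rho> s' * x i s'))"
  then obtain \<rho> x where a: "parimutuel_eq n p \<rho> x"
    and b: "\<forall>i\<in>{1..n}. \<forall>s. \<rho>s i s = \<rho> s * x i s / (\<Sum>s'\<in>UNIV. \<rho> s' * x i s')" by blast
  show "nash_eq n p \<rho>s" by (rule backward_dir[OF assms a b])
next
  fix \<rho> x
  assume h: "nash_eq n p \<rho>s \<and> parimutuel_eq n p \<rho> x \<and>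
              (\<forall>i\<in>{1..n}. \<forall>s. \<rho>s i s = \<rho> s * x i s / (\<Sum>s'\<in>UNIV. \<rho> s' * x i s'))"
  from h have a: "parimutuel_eq n p \<rho> x"
    and b: "\<forall>i\<in>{1..n}. \<forall>s. \<rho>s i s = \<rho> s * x i s / (\<Sum>s'\<in>UNIV. \<rho> s' * x i s')" by simp_all
  show "pool n \<rho>s = \<rho>" by (rule pool_eq[OF a assms(1) b])
qed

end
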